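(* Let $p \ge 1$. Let $\rho:\mathbb{R}^3\to\mathbb{R}_{\ge 0}$ be a probability density supported in the closed unit ball of $\mathbb{R}^3$, and let $I_1, I_2$ be its tomographic projections along the unit vectors $\mathbf{u}$ and $\mathbf{v}$ respectively. Denote by $\measuredangle(\mathbf{u},\mathbf{v})\in[0,\pi]$ the angle between $\mathbf{u}$ and $\mathbf{v}$. Then $$W_p^R(I_1,I_2)^p \le \big[2\sin(\measuredangle(\mathbf{u},\mathbf{v})/2)\big]^p \le \measuredangle(\mathbf{u},\mathbf{v})^p .$$
   Context: For $R\in\mathrm{SO}(3)$ define $(R\rho)(\mathbf{x})=\rho(R^T\mathbf{x})$. The tomographic projection of $\rho$ along a unit vector $\mathbf{u}$ is the function on $\mathbb{R}^2$ given by $I(x,y)=\int_{\mathbb{R}}(R\rho)(x,y,z)\,dz$, where $R\in\mathrm{SO}(3)$ is any rotation with $R\mathbf{u}=(0,0,-1)$; different choices of $R$ change $I$ only by an in-plane rotation. Such a projection is a probability density on $\mathbb{R}^2$ supported in the closed unit disk. For probability measures $\mu,\nu$ on $\mathbb{R}^2$, $W_p(\mu,\nu)=\big(\inf_{\pi\in\Pi(\mu,\nu)}\int\|a-b\|^p\,d\pi(a,b)\big)^{1/p}$, where $\Pi(\mu,\nu)$ is the set of couplings (joint distributions with marginals $\mu,\nu$). For $g\in\mathrm{SO}(2)$ and a density $I$ on $\mathbb{R}^2$ let $(gI)(\mathbf{w})=I(g^T\mathbf{w})$. The rotationally-invariant Wasserstein distance is $W_p^R(I_1,I_2)=\min_{g\in\mathrm{SO}(2)}W_p(I_1,gI_2)$.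 *)

theory Defs
  imports "HOL-Probability.Probability"
begin

text \<open>Rotation groups SO(3), SO(2) as real matrices.\<close>
definition SO :: "(real^'n^'n) set" where
  "SO = {R. orthogonal_matrix R \<and> det R = 1}"

text \<open>Rotated density: (R rho)(x) = rho(R^T x).\<close>
definition rot_density :: "real^'n^'n \<Rightarrow> (real^'n \<Rightarrow> real) \<Rightarrow> (real^'n \<Rightarrow> real)" where
  "rot_density R \<rho> = (\<lambda>x. \<rho> (transpose R *v x))"

text \<open>Tomographic projection computed with a given rotation R:
  I(x,y) = integral over z of (R rho)(x,y,z).\<close>
definition tomo_proj :: "real^3^3 \<Rightarrow> (real^3 \<Rightarrow> real) \<Rightarrow> (real^2 \<Rightarrow> real)" where
  "tomo_proj R \<rho> = (\<lambda>w. LINT z|lborel. rot_density R \<rho> (vector [w$1, w$2, z]))"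

text \<open>Probability measure on R^2 with a given density.\<close>
definition dens_measure :: "(real^2 \<Rightarrow> real) \<Rightarrow> (real^2) measure" where
  "dens_measure I = density lborel (\<lambda>w. ennreal (I w))"

text \<open>Couplings of two measures.\<close>
definition couplings :: "'a measure \<Rightarrow> 'b measure \<Rightarrow> ('a \<times> 'b) measure set" where
  "couplings \<mu> \<nu> = {\<pi>. sets \<pi> = sets (\<mu> \<Otimes>\<^sub>M \<nu>) \<and> prob_space \<pi> \<and>
      distr \<pi> \<mu> fst = \<mu> \<and> distr \<pi> \<nu> snd = \<nu>}"

text \<open>p-Wasserstein distance.\<close>
definition wasserstein :: "real \<Rightarrow> 'a::metric_space measure \<Rightarrow> 'a measure \<Rightarrow> real" where
  "wasserstein p \<mu> \<nu> =
     (enn2real (INF \<pi>\<in>couplings \<mu> \<nu>. \<integral>\<^sup>+ ab. ennreal (dist (fst ab) (snd ab) powr p) \<partial>\<pi>)) powr (1 / p)"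

text \<open>Rotationally invariant Wasserstein distance between densities on R^2.\<close>
definition wasserstein_rot :: "real \<Rightarrow> (real^2 \<Rightarrow> real) \<Rightarrow> (real^2 \<Rightarrow> real) \<Rightarrow> real" where
  "wasserstein_rot p I1 I2 =
     (INF g\<in>(SO :: (real^2^2) set). wasserstein p (dens_measure I1) (dens_measure (rot_density g I2)))"

text \<open>Angle between two nonzero vectors, in [0, pi].\<close>
definition vec_angle :: "real^'n \<Rightarrow> real^'n \<Rightarrow> real" where
  "vec_angle u v = arccos ((u \<bullet> v) / (norm u * norm v))"

end

theory Submission
  imports Defs
begin

lemma lborel_orth:
  fixes R :: "real^3^3"
  assumes R: "orthogonal_matrix R"
  shows "distr lborel borel (\<lambda>x. R *v x) = lborel"
proof (rule lborel_eqI[symmetric])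
  have RT: "transpose R ** R = mat 1" "R ** transpose R = mat 1"
    using R by (auto simp: orthogonal_matrix_def)
  have lin: "linear (\<lambda>x. R *v x)" "linear (\<lambda>x. transpose R *v x)" by (rule matrix_vector_mul_linear)+
  have meas[measurable]: "(\<lambda>x. R *v x) \<in> borel_measurable borel"
    by (intro borel_measurable_continuous_onI linear_continuous_on linear_conv_bounded_linear[THEN iffD1] lin)
  fix l u :: "real^3"
  assume le: "\<And>b. b \<in> Basis \<Longrightarrow> l \<bullet> b \<le> u \<bullet> b"
  let ?T = "\<lambda>x. transpose R *v x"
  have inv1: "\<And>x. R *v (transpose R *v x) = x" and inv2: "\<And>x. transpose R *v (R *v x) = x"
    using RT by (simp_all add: matrix_vector_mul_assoc del: transpose_matrix_vector)
  have pre: "(\<lambda>x. R *v x) -` box l u = ?T ` box l u"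
  proof (intro equalityI subsetI)
    fix x assume "x \<in> (\<lambda>x. R *v x) -` box l u"
    then have "R *v x \<in> box l u" by simp
    then show "x \<in> ?T ` box l u" using inv2[of x] by (metis image_eqI)
  next
    fix x assume "x \<in> ?T ` box l u"
    then show "x \<in> (\<lambda>x. R *v x) -` box l u" using inv1 by (auto simp del: transpose_matrix_vector)
  qed
  have bor: "?T ` box l u \<in> sets borel"
    unfolding pre[symmetric] using measurable_sets[OF meas, of "box l u"] by simp
  have bnd: "bounded (?T ` box l u)"
    by (intro bounded_linear_image bounded_box linear_conv_bounded_linear[THEN iffD1] lin)
  have ot: "orthogonal_transformation ?T"
    unfolding orthogonal_transformation_matrix using R lin(2) by (simp add: matrix_of_matrix_vector_mul del: transpose_matrix_vector)
  have "emeasure (distr lborel borel (\<lambda>x. R *v x)) (box l u) = emeasure lborel (?T ` box l u)"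
    by (simp add: emeasure_distr pre)
  also have "\<dots> = ennreal (measure lborel (?T ` box l u))"
    using emeasure_bounded_finite[OF bnd] by (simp add: emeasure_eq_ennreal_measure)
  also have "measure lborel (?T ` box l u) = measure lebesgue (?T ` box l u)"
    using bor by simp
  also have "\<dots> = measure lebesgue (box l u)"
    by (rule measure_orthogonal_image[OF ot]) simp
  also have "\<dots> = measure lborel (box l u)" by simp
  also have "ennreal \<dots> = emeasure lborel (box l u)"
    by (rule emeasure_eq_ennreal_measure[symmetric]) (use emeasure_lborel_box_finite[of l u] in simp)
  finally show "emeasure (distr lborel borel (\<lambda>x. R *v x)) (box l u) = (\<Prod>b\<in>Basis. (u - l) \<bullet> b)"
    using le by simp
qed simp

lemma vec_nth_measurable[measurable]:
  fixes f :: "'a \<Rightarrow> real^'n"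
  shows "f \<in> borel_measurable M \<Longrightarrow> (\<lambda>x. f x $ i :: real) \<in> borel_measurable M"
proof -
  have "(\<lambda>x::real^'n. x $ i) \<in> borel_measurable borel"
    by (intro borel_measurable_continuous_onI linear_continuous_on bounded_linear_vec_nth)
  moreover assume "f \<in> borel_measurable M"
  ultimately show ?thesis by (rule measurable_compose[rotated])
qed

lemma measurable_cart:
  fixes f :: "'a \<Rightarrow> real^'n"
  assumes "\<And>i. (\<lambda>x. f x $ i) \<in> borel_measurable M"
  shows "f \<in> borel_measurable M"
proof (subst borel_measurable_euclidean_space, intro ballI)
  fix b :: "real^'n" assume "b \<in> Basis"
  then obtain i where b: "b = axis i 1" by (auto simp: Basis_vec_def)
  show "(\<lambda>x. f x \<bullet> b) \<in> borel_measurable M"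
    unfolding b inner_axis using assms[of i] by simp
qed

lemma prod_Basis_cart: "(\<Prod>b\<in>Basis. (x::real^'n) \<bullet> b) = (\<Prod>i\<in>UNIV. x$i)"
proof -
  have B: "(Basis :: (real^'n) set) = range (\<lambda>i. axis i 1)" by (auto simp: Basis_vec_def)
  have inj: "inj (\<lambda>i::'n. axis i (1::real))" by (auto intro!: injI simp: axis_eq_axis)
  show ?thesis unfolding B by (subst prod.reindex[OF inj]) (simp add: inner_axis)
qed

lemma emb_measurable[measurable]:
  "(\<lambda>p::(real^2) \<times> real. vector [fst p $ 1, fst p $ 2, snd p] :: real^3) \<in> borel_measurable borel"
proof (rule measurable_cart)
  fix i :: 3
  show "(\<lambda>p::(real^2) \<times> real. (vector [fst p $ 1, fst p $ 2, snd p] :: real^3) $ i) \<in> borel_measurable borel"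
    using exhaust_3[of i] by (elim disjE) (simp_all add: borel_prod[symmetric])
qed

lemma prod_2': "prod f (UNIV::2 set) = f 1 * f 2"
  unfolding UNIV_2 by simp

lemma prod_3': "prod f (UNIV::3 set) = f 1 * f 2 * f 3"
  unfolding UNIV_3 by (simp add: ac_simps)

lemma lborel_emb:
  "distr (lborel \<Otimes>\<^sub>M lborel) borel (\<lambda>p::(real^2) \<times> real. vector [fst p $ 1, fst p $ 2, snd p] :: real^3) = lborel"
proof (rule lborel_eqI[symmetric])
  let ?e = "\<lambda>p::(real^2) \<times> real. vector [fst p $ 1, fst p $ 2, snd p] :: real^3"
  have m: "?e \<in> borel_measurable (lborel \<Otimes>\<^sub>M lborel)"
    using emb_measurable by (simp add: lborel_prod)
  fix l u :: "real^3"
  assume le: "\<And>b. b \<in> Basis \<Longrightarrow> l \<bullet> b \<le> u \<bullet> b"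
  then have le': "l $ i \<le> u $ i" for i
    using le[of "axis i 1"] by (auto simp: Basis_vec_def inner_axis)
  let ?l2 = "vector [l$1, l$2] :: real^2" and ?u2 = "vector [u$1, u$2] :: real^2"
  have pre: "?e -` box l u \<inter> space (lborel \<Otimes>\<^sub>M lborel) = box ?l2 ?u2 \<times> {l$3<..<u$3}"
    by (auto simp: mem_box_cart forall_2 forall_3 space_pair_measure)
  have P: "(\<Prod>b\<in>Basis. (u - l) \<bullet> b) = (u$1 - l$1) * (u$2 - l$2) * (u$3 - l$3)"
    unfolding prod_Basis_cart prod_3' by simp
  have "emeasure (distr (lborel \<Otimes>\<^sub>M lborel) borel ?e) (box l u) = emeasure (lborel \<Otimes>\<^sub>M lborel) (box ?l2 ?u2 \<times> {l$3<..<u$3})"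
    using m by (subst emeasure_distr) (simp_all add: pre)
  also have "\<dots> = emeasure lborel (box ?l2 ?u2) * emeasure lborel {l$3<..<u$3}"
    by (rule lborel.emeasure_pair_measure_Times) simp_all
  also have "emeasure lborel (box ?l2 ?u2) = (\<Prod>b\<in>Basis. (?u2 - ?l2) \<bullet> b)"
  proof (rule emeasure_lborel_box)
    have le2: "?l2 $ j \<le> ?u2 $ j" for j :: 2 using exhaust_2[of j] le' by auto
    fix b :: "real^2" assume "b \<in> Basis" then show "?l2 \<bullet> b \<le> ?u2 \<bullet> b"
      using le2 by (auto simp: Basis_vec_def inner_axis)
  qed
  also have "\<dots> = (u$1 - l$1) * (u$2 - l$2)"
    unfolding prod_Basis_cart prod_2' by simp
  also have "emeasure lborel {l$3<..<u$3} = u$3 - l$3"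
    using le'[of 3] by simp
  finally show "emeasure (distr (lborel \<Otimes>\<^sub>M lborel) borel ?e) (box l u) = (\<Prod>b\<in>Basis. (u - l) \<bullet> b)"
    using le'[of 1] le'[of 2] le'[of 3] unfolding P by (simp add: ennreal_mult[symmetric])
qed simp

lemma vec2_eta: "vector [w$1, w$2] = (w::real^2)"
  by (simp add: vec_eq_iff forall_2)

lemma proj_measurable[measurable]: "(\<lambda>y::real^3. vector [y$1, y$2] :: real^2) \<in> borel_measurable borel"
proof (rule measurable_cart)
  fix i :: 2
  show "(\<lambda>y::real^3. (vector [y$1, y$2] :: real^2) $ i) \<in> borel_measurable borel"
    using exhaust_2[of i] by (elim disjE) simp_all
qed

lemma matvec_measurable[measurable]: "(\<lambda>x. (A::real^'n^'m) *v x) \<in> borel_measurable borel"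
  by (intro borel_measurable_continuous_onI linear_continuous_on linear_conv_bounded_linear[THEN iffD1] matrix_vector_mul_linear)

lemma slice_measurable[measurable]: "(\<lambda>z::real. vector [(w::real^2)$1, w$2, z] :: real^3) \<in> borel_measurable borel"
proof (rule measurable_cart)
  fix i :: 3
  show "(\<lambda>z::real. (vector [w$1, w$2, z] :: real^3) $ i) \<in> borel_measurable borel"
    using exhaust_3[of i] by (elim disjE) simp_all
qed

lemma nn_fubini3:
  fixes g :: "real^3 \<Rightarrow> ennreal"
  assumes [measurable]: "g \<in> borel_measurable borel"
  shows "(\<integral>\<^sup>+x. g x \<partial>lborel) = (\<integral>\<^sup>+(w::real^2). \<integral>\<^sup>+z. g (vector [w$1, w$2, z]) \<partial>lborel \<partial>lborel)"
proof -
  let ?e = "\<lambda>p::(real^2) \<times> real. vector [fst p $ 1, fst p $ 2, snd p] :: real^3"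
  have m: "(\<lambda>p. g (?e p)) \<in> borel_measurable (lborel \<Otimes>\<^sub>M lborel)"
    unfolding lborel_prod measurable_lborel2 by measurable
  have "(\<integral>\<^sup>+x. g x \<partial>lborel) = (\<integral>\<^sup>+x. g x \<partial>distr (lborel \<Otimes>\<^sub>M lborel) borel ?e)"
    by (simp only: lborel_emb)
  also have "\<dots> = (\<integral>\<^sup>+p. g (?e p) \<partial>(lborel \<Otimes>\<^sub>M lborel))"
    by (rule nn_integral_distr) (use emb_measurable in \<open>simp_all add: lborel_prod\<close>)
  also have "\<dots> = (\<integral>\<^sup>+w. \<integral>\<^sup>+z. g (?e (w, z)) \<partial>lborel \<partial>lborel)"
    by (rule lborel.nn_integral_fst[symmetric, OF m])
  finally show ?thesis by simp
qed

lemma proj_distr: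
  fixes A :: "real^3^3" and \<rho> :: "real^3 \<Rightarrow> real"
  assumes A: "orthogonal_matrix A" and \<rho>m: "\<rho> \<in> borel_measurable lborel"
    and nn: "\<forall>x. \<rho> x \<ge> 0" and one: "(\<integral>\<^sup>+x. ennreal (\<rho> x) \<partial>lborel) = 1"
  shows "dens_measure (tomo_proj A \<rho>) =
    distr (density lborel (\<lambda>x. ennreal (\<rho> x))) lborel (\<lambda>x. vector [(A *v x)$1, (A *v x)$2] :: real^2)"
proof -
  have \<rho>b[measurable]: "\<rho> \<in> borel_measurable borel" using \<rho>m by simp
  have AT: "transpose A ** A = mat 1" using A by (simp add: orthogonal_matrix)
  have inv: "\<And>x. transpose A *v (A *v x) = x"
    using AT by (simp add: matrix_vector_mul_assoc del: transpose_matrix_vector)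
  have rot: "(\<integral>\<^sup>+y. h y \<partial>lborel) = (\<integral>\<^sup>+x. h (A *v x) \<partial>lborel)"
    if hm[measurable]: "h \<in> borel_measurable borel" for h :: "real^3 \<Rightarrow> ennreal"
  proof -
    have "(\<integral>\<^sup>+y. h y \<partial>lborel) = (\<integral>\<^sup>+y. h y \<partial>distr lborel borel (\<lambda>x. A *v x))"
      by (simp only: lborel_orth[OF A])
    also have "\<dots> = (\<integral>\<^sup>+x. h (A *v x) \<partial>lborel)"
      by (rule nn_integral_distr) simp_all
    finally show ?thesis .
  qed
  define \<sigma> where "\<sigma> y = \<rho> (transpose A *v y)" for y
  have \<sigma>m[measurable]: "\<sigma> \<in> borel_measurable borel"
  proof -
    have "(\<lambda>y. \<rho> (transpose A *v y)) \<in> borel_measurable borel" by measurable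
    then show ?thesis by (simp add: \<sigma>_def[abs_def] del: transpose_matrix_vector)
  qed
  have \<sigma>A: "\<sigma> (A *v x) = \<rho> x" for x
    using inv by (simp add: \<sigma>_def del: transpose_matrix_vector)
  have \<sigma>nn: "\<sigma> y \<ge> 0" for y using nn by (simp add: \<sigma>_def)
  define F where "F w = (\<integral>\<^sup>+z. ennreal (\<sigma> (vector [w$1, w$2, z])) \<partial>lborel)" for w :: "real^2"
  have Fm[measurable]: "F \<in> borel_measurable lborel"
  proof -
    have "(\<lambda>p::(real^2) \<times> real. ennreal (\<sigma> (vector [fst p $ 1, fst p $ 2, snd p]))) \<in> borel_measurable borel"
      by measurable
    then have "case_prod (\<lambda>(w::real^2) z. ennreal (\<sigma> (vector [w$1, w$2, z]))) \<in> borel_measurable (lborel \<Otimes>\<^sub>M lborel)"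
      unfolding lborel_prod measurable_lborel2 by (simp add: case_prod_beta')
    then show ?thesis unfolding F_def[abs_def] by (rule lborel.borel_measurable_nn_integral)
  qed
  have key: "(\<integral>\<^sup>+x. ennreal (\<rho> x) * indicator E (vector [(A *v x)$1, (A *v x)$2] :: real^2) \<partial>lborel)
      = (\<integral>\<^sup>+w. F w * indicator E w \<partial>lborel)" if E[measurable]: "E \<in> sets borel" for E
  proof -
    let ?h = "\<lambda>y. ennreal (\<sigma> y) * indicator E (vector [y$1, y$2] :: real^2)"
    have hm: "?h \<in> borel_measurable borel" by measurable
    have "(\<integral>\<^sup>+x. ennreal (\<rho> x) * indicator E (vector [(A *v x)$1, (A *v x)$2] :: real^2) \<partial>lborel)
        = (\<integral>\<^sup>+x. ?h (A *v x) \<partial>lborel)" by (simp only: \<sigma>A)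
    also have "\<dots> = (\<integral>\<^sup>+y. ?h y \<partial>lborel)" by (rule rot[symmetric, OF hm])
    also have "\<dots> = (\<integral>\<^sup>+(w::real^2). \<integral>\<^sup>+z. ?h (vector [w$1, w$2, z]) \<partial>lborel \<partial>lborel)"
      by (rule nn_fubini3[OF hm])
    also have "\<dots> = (\<integral>\<^sup>+w. F w * indicator E w \<partial>lborel)"
    proof (rule nn_integral_cong)
      fix w :: "real^2"
      have "(\<integral>\<^sup>+z. ?h (vector [w$1, w$2, z]) \<partial>lborel) = (\<integral>\<^sup>+z. ennreal (\<sigma> (vector [w$1, w$2, z])) * indicator E w \<partial>lborel)"
        by (simp add: vec2_eta)
      also have "\<dots> = F w * indicator E w"
        unfolding F_def by (rule nn_integral_multc) (simp only: measurable_lborel2, measurable)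
      finally show "(\<integral>\<^sup>+z. ?h (vector [w$1, w$2, z]) \<partial>lborel) = F w * indicator E w" .
    qed
    finally show ?thesis .
  qed
  have "(\<integral>\<^sup>+w. F w \<partial>lborel) = 1"
    using key[of UNIV] one by simp
  then have AEfin: "AE w in lborel. F w \<noteq> \<infinity>"
    by (intro nn_integral_PInf_AE Fm) simp
  have AEeq: "AE w in lborel. F w = ennreal (tomo_proj A \<rho> w)"
    using AEfin
  proof eventually_elim
    case (elim w)
    have int: "integrable lborel (\<lambda>z. \<sigma> (vector [w$1, w$2, z]))"
    proof (rule integrableI_nonneg)
      show "(\<lambda>z. \<sigma> (vector [w$1, w$2, z])) \<in> borel_measurable lborel"
      proof -
        have "(\<lambda>z::real. vector [w$1, w$2, z] :: real^3) \<in> borel_measurable borel"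
        proof (rule measurable_cart)
          fix i :: 3
          show "(\<lambda>z::real. (vector [w$1, w$2, z] :: real^3) $ i) \<in> borel_measurable borel"
            using exhaust_3[of i] by (elim disjE) simp_all
        qed
        then show ?thesis by simp
      qed
      show "AE z in lborel. 0 \<le> \<sigma> (vector [w$1, w$2, z])" using \<sigma>nn by simp
      show "(\<integral>\<^sup>+z. ennreal (\<sigma> (vector [w$1, w$2, z])) \<partial>lborel) < \<infinity>"
        using elim by (simp add: F_def less_top)
    qed
    have "F w = ennreal (LINT z|lborel. \<sigma> (vector [w$1, w$2, z]))"
      unfolding F_def by (rule nn_integral_eq_integral[OF int]) (simp add: \<sigma>nn)
    also have "(LINT z|lborel. \<sigma> (vector [w$1, w$2, z])) = tomo_proj A \<rho> w"
      by (simp add: tomo_proj_def rot_density_def \<sigma>_def)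
    finally show ?case .
  qed
  have T: "tomo_proj A \<rho> = (\<lambda>w. LINT z|lborel. \<sigma> (vector [w$1, w$2, z]))"
    by (simp add: fun_eq_iff tomo_proj_def rot_density_def \<sigma>_def)
  have Tm[measurable]: "(\<lambda>w::real^2. LINT z|lborel. \<sigma> (vector [w$1, w$2, z])) \<in> borel_measurable lborel"
  proof -
    have "(\<lambda>p::(real^2) \<times> real. \<sigma> (vector [fst p $ 1, fst p $ 2, snd p])) \<in> borel_measurable borel"
      by measurable
    then have "case_prod (\<lambda>(w::real^2) z. \<sigma> (vector [w$1, w$2, z])) \<in> borel_measurable (lborel \<Otimes>\<^sub>M lborel)"
      unfolding lborel_prod measurable_lborel2 by (simp add: case_prod_beta')
    then show ?thesis by (rule lborel.borel_measurable_lebesgue_integral)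
  qed
  have Im: "(\<lambda>w. ennreal (tomo_proj A \<rho> w)) \<in> borel_measurable lborel"
    unfolding T by measurable
  show ?thesis
  proof (rule measure_eqI)
    show "sets (dens_measure (tomo_proj A \<rho>)) = sets (distr (density lborel (\<lambda>x. ennreal (\<rho> x))) lborel (\<lambda>x. vector [(A *v x)$1, (A *v x)$2] :: real^2))"
      by (simp add: dens_measure_def)
    fix E assume "E \<in> sets (dens_measure (tomo_proj A \<rho>))"
    then have E[measurable]: "E \<in> sets borel" by (simp add: dens_measure_def)
    have "emeasure (dens_measure (tomo_proj A \<rho>)) E = (\<integral>\<^sup>+w. ennreal (tomo_proj A \<rho> w) * indicator E w \<partial>lborel)"
      unfolding dens_measure_def by (rule emeasure_density[OF Im]) simp
    also have "\<dots> = (\<integral>\<^sup>+w. F w * indicator E w \<partial>lborel)"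
      by (rule nn_integral_cong_AE) (use AEeq in auto)
    also have "\<dots> = (\<integral>\<^sup>+x. ennreal (\<rho> x) * indicator E (vector [(A *v x)$1, (A *v x)$2] :: real^2) \<partial>lborel)"
      by (rule key[symmetric, OF E])
    also have "\<dots> = emeasure (distr (density lborel (\<lambda>x. ennreal (\<rho> x))) lborel (\<lambda>x. vector [(A *v x)$1, (A *v x)$2] :: real^2)) E"
    proof -
      have pm: "(\<lambda>x. vector [(A *v x)$1, (A *v x)$2] :: real^2) \<in> borel_measurable borel"
        using measurable_compose[OF matvec_measurable proj_measurable] by simp
      have pre: "(\<lambda>x. vector [(A *v x)$1, (A *v x)$2] :: real^2) -` E \<in> sets lborel"
        using measurable_sets_borel[OF pm E] by simp
      have "emeasure (distr (density lborel (\<lambda>x. ennreal (\<rho> x))) lborel (\<lambda>x. vector [(A *v x)$1, (A *v x)$2] :: real^2)) E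
          = emeasure (density lborel (\<lambda>x. ennreal (\<rho> x))) ((\<lambda>x. vector [(A *v x)$1, (A *v x)$2] :: real^2) -` E)"
        by (subst emeasure_distr) (use pm in simp_all)
      also have "\<dots> = (\<integral>\<^sup>+x. ennreal (\<rho> x) * indicator ((\<lambda>x. vector [(A *v x)$1, (A *v x)$2] :: real^2) -` E) x \<partial>lborel)"
        by (rule emeasure_density) (use pre in simp_all)
      finally show ?thesis by (simp add: indicator_vimage)
    qed
    finally show "emeasure (dens_measure (tomo_proj A \<rho>)) E = emeasure (distr (density lborel (\<lambda>x. ennreal (\<rho> x))) lborel (\<lambda>x. vector [(A *v x)$1, (A *v x)$2] :: real^2)) E" .
  qed
qed

lemma wass_bound:
  fixes A B :: "real^3^3" and \<rho> :: "real^3 \<Rightarrow> real" and p c :: real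
  assumes A: "orthogonal_matrix A" and B: "orthogonal_matrix B"
    and \<rho>m: "\<rho> \<in> borel_measurable lborel"
    and nn: "\<forall>x. \<rho> x \<ge> 0" and one: "(\<integral>\<^sup>+x. ennreal (\<rho> x) \<partial>lborel) = 1"
    and supp: "\<forall>x. x \<notin> cball 0 1 \<longrightarrow> \<rho> x = 0"
    and p: "p \<ge> 1" and c: "c \<ge> 0"
    and bound: "\<And>x. x \<in> cball 0 1 \<Longrightarrow>
       dist (vector [(A *v x)$1, (A *v x)$2] :: real^2) (vector [(B *v x)$1, (B *v x)$2]) \<le> c"
  shows "wasserstein p (dens_measure (tomo_proj A \<rho>)) (dens_measure (tomo_proj B \<rho>)) \<le> c"
proof -
  have \<rho>b[measurable]: "\<rho> \<in> borel_measurable borel" using \<rho>m by simp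
  define M where "M = density lborel (\<lambda>x. ennreal (\<rho> x))"
  define PA where "PA = (\<lambda>x. vector [(A *v x)$1, (A *v x)$2] :: real^2)"
  define PB where "PB = (\<lambda>x. vector [(B *v x)$1, (B *v x)$2] :: real^2)"
  have PAm: "PA \<in> borel_measurable borel"
    unfolding PA_def using measurable_compose[OF matvec_measurable proj_measurable] by simp
  have PBm: "PB \<in> borel_measurable borel"
    unfolding PB_def using measurable_compose[OF matvec_measurable proj_measurable] by simp
  define \<mu> where "\<mu> = distr M lborel PA"
  define \<nu> where "\<nu> = distr M lborel PB"
  have eq1: "dens_measure (tomo_proj A \<rho>) = \<mu>"
    unfolding \<mu>_def M_def PA_def by (rule proj_distr[OF A \<rho>m nn one])
  have eq2: "dens_measure (tomo_proj B \<rho>) = \<nu>"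
    unfolding \<nu>_def M_def PB_def by (rule proj_distr[OF B \<rho>m nn one])
  have SM: "sets M = sets borel" by (simp add: M_def)
  have S\<mu>: "sets \<mu> = sets borel" by (simp add: \<mu>_def)
  have S\<nu>: "sets \<nu> = sets borel" by (simp add: \<nu>_def)
  have Sp: "sets (\<mu> \<Otimes>\<^sub>M \<nu>) = sets (borel :: ((real^2) \<times> (real^2)) measure)"
  proof -
    have "sets (\<mu> \<Otimes>\<^sub>M \<nu>) = sets ((borel :: (real^2) measure) \<Otimes>\<^sub>M (borel :: (real^2) measure))"
      by (rule sets_pair_measure_cong[OF S\<mu> S\<nu>])
    then show ?thesis by (metis borel_prod)
  qed
  define h where "h = (\<lambda>x. (PA x, PB x))"
  have hm: "h \<in> measurable M (\<mu> \<Otimes>\<^sub>M \<nu>)"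
    unfolding h_def
  proof (rule measurable_Pair)
    show "PA \<in> measurable M \<mu>" using PAm by (simp add: measurable_cong_sets[OF SM S\<mu>])
    show "PB \<in> measurable M \<nu>" using PBm by (simp add: measurable_cong_sets[OF SM S\<nu>])
  qed
  have probM: "prob_space M"
  proof (rule prob_spaceI)
    show "emeasure M (space M) = 1"
      using one by (simp add: M_def emeasure_density)
  qed
  define \<pi> where "\<pi> = distr M (\<mu> \<Otimes>\<^sub>M \<nu>) h"
  have coup: "\<pi> \<in> couplings \<mu> \<nu>"
    unfolding couplings_def
  proof (intro CollectI conjI)
    show "sets \<pi> = sets (\<mu> \<Otimes>\<^sub>M \<nu>)" by (simp add: \<pi>_def)
    show "prob_space \<pi>" unfolding \<pi>_def by (rule prob_space.prob_space_distr[OF probM hm])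
    have "distr \<pi> \<mu> fst = distr M \<mu> (fst \<circ> h)"
      unfolding \<pi>_def by (rule distr_distr[OF measurable_fst hm])
    also have "\<dots> = distr M lborel PA"
      by (rule distr_cong) (simp_all add: S\<mu> h_def)
    finally show "distr \<pi> \<mu> fst = \<mu>" by (simp add: \<mu>_def)
    have "distr \<pi> \<nu> snd = distr M \<nu> (snd \<circ> h)"
      unfolding \<pi>_def by (rule distr_distr[OF measurable_snd hm])
    also have "\<dots> = distr M lborel PB"
      by (rule distr_cong) (simp_all add: S\<nu> h_def)
    finally show "distr \<pi> \<nu> snd = \<nu>" by (simp add: \<nu>_def)
  qed
  have dm: "(\<lambda>ab. ennreal (dist (fst ab) (snd ab) powr p)) \<in> borel_measurable (\<mu> \<Otimes>\<^sub>M \<nu>)"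
  proof -
    have "(\<lambda>ab::(real^2) \<times> (real^2). ennreal (dist (fst ab) (snd ab) powr p)) \<in> borel_measurable ((borel :: (real^2) measure) \<Otimes>\<^sub>M (borel :: (real^2) measure))"
      by measurable
    then show ?thesis by (simp add: measurable_cong_sets[OF sets_pair_measure_cong[OF S\<mu> S\<nu>] refl])
  qed
  have cost: "(\<integral>\<^sup>+ab. ennreal (dist (fst ab) (snd ab) powr p) \<partial>\<pi>) \<le> ennreal (c powr p)"
  proof -
    have "(\<integral>\<^sup>+ab. ennreal (dist (fst ab) (snd ab) powr p) \<partial>\<pi>)
        = (\<integral>\<^sup>+x. ennreal (dist (PA x) (PB x) powr p) \<partial>M)"
    proof -
      have dm': "(\<lambda>ab. ennreal (dist (fst ab) (snd ab) powr p)) \<in> borel_measurable (distr M (\<mu> \<Otimes>\<^sub>M \<nu>) h)"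
        using dm by (subst measurable_cong_sets[OF sets_distr refl])
      show ?thesis
        unfolding \<pi>_def by (subst nn_integral_distr[OF hm dm']) (simp add: h_def)
    qed
    also have "\<dots> = (\<integral>\<^sup>+x. ennreal (\<rho> x) * ennreal (dist (PA x) (PB x) powr p) \<partial>lborel)"
      unfolding M_def
      by (rule nn_integral_density) (use PAm PBm in \<open>simp_all\<close>)
    also have "\<dots> \<le> (\<integral>\<^sup>+x. ennreal (\<rho> x) * ennreal (c powr p) \<partial>lborel)"
    proof (rule nn_integral_mono)
      fix x
      show "ennreal (\<rho> x) * ennreal (dist (PA x) (PB x) powr p) \<le> ennreal (\<rho> x) * ennreal (c powr p)"
      proof (cases "x \<in> cball 0 1")
        case True
        have "dist (PA x) (PB x) powr p \<le> c powr p"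
          using bound[OF True] p by (intro powr_mono2) (auto simp: PA_def PB_def)
        then show ?thesis by (intro mult_left_mono ennreal_leI) simp_all
      next
        case False
        then show ?thesis using supp by simp
      qed
    qed
    also have "\<dots> = ennreal (c powr p)"
      using one by (simp add: nn_integral_multc)
    finally show ?thesis .
  qed
  have inf: "(INF \<pi>\<in>couplings \<mu> \<nu>. \<integral>\<^sup>+ ab. ennreal (dist (fst ab) (snd ab) powr p) \<partial>\<pi>) \<le> ennreal (c powr p)"
    using coup cost by (meson INF_lower order_trans)
  have e2r: "enn2real (INF \<pi>\<in>couplings \<mu> \<nu>. \<integral>\<^sup>+ ab. ennreal (dist (fst ab) (snd ab) powr p) \<partial>\<pi>) \<le> c powr p"
    using enn2real_mono[OF inf] by simp
  have "wasserstein p \<mu> \<nu> \<le> (c powr p) powr (1 / p)"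
    unfolding wasserstein_def using p by (intro powr_mono2 e2r) simp_all
  also have "\<dots> = c"
    using p c by (simp add: powr_powr powr_one)
  finally show ?thesis by (simp add: eq1 eq2)
qed



definition H :: "real^3 \<Rightarrow> real^3^3" where
  "H s = (\<chi> i j. (if i = j then 1 else 0) - (2 / (s \<bullet> s)) * s$i * s$j)"

lemma H_apply: "H s *v x = x - (2 * (s \<bullet> x) / (s \<bullet> s)) *\<^sub>R s"
  by (simp add: H_def vec_eq_iff matrix_vector_mult_def inner_vec_def sum_3 forall_3 algebra_simps add_divide_distrib diff_divide_distrib)

lemma det_rank1: "det (\<chi> i j. (if i = j then 1 else 0) - c * (s::real^3)$i * s$j) = 1 - c * (s$1 * s$1 + s$2 * s$2 + s$3 * s$3)"
  by (simp add: det_3 algebra_simps)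

lemma det_H: assumes "s \<noteq> 0" shows "det (H s) = -1"
proof -
  have ss: "s \<bullet> s = s$1 * s$1 + s$2 * s$2 + s$3 * s$3" by (simp add: inner_vec_def sum_3)
  have "s \<bullet> s \<noteq> 0" using assms by simp
  then show ?thesis unfolding H_def det_rank1 ss[symmetric] by simp
qed

lemma H_sym: "transpose (H s) = H s"
  by (simp add: H_def transpose_def vec_eq_iff mult.commute)

lemma H_invol: assumes "s \<noteq> 0" shows "H s ** H s = mat 1"
proof -
  have ss: "s \<bullet> s \<noteq> 0" using assms by simp
  show ?thesis
  proof (subst matrix_eq, intro allI)
    fix x
    show "(H s ** H s) *v x = mat 1 *v x"
    proof -
      define c where "c = 2 * (s \<bullet> x) / (s \<bullet> s)"
      have "s \<bullet> (x - c *\<^sub>R s) = - (s \<bullet> x)"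
        using ss by (simp add: c_def inner_diff_right)
      then have eq: "2 * (s \<bullet> (x - c *\<^sub>R s)) / (s \<bullet> s) = - c"
        by (simp add: c_def)
      have "H s *v (H s *v x) = (x - c *\<^sub>R s) - (2 * (s \<bullet> (x - c *\<^sub>R s)) / (s \<bullet> s)) *\<^sub>R s"
        unfolding H_apply c_def ..
      also have "\<dots> = x" unfolding eq by simp
      finally have "H s *v (H s *v x) = x" .
      then show ?thesis by (simp add: matrix_vector_mul_assoc[symmetric])
    qed
  qed
qed

lemma H_orth: assumes "s \<noteq> 0" shows "orthogonal_matrix (H s)"
  unfolding orthogonal_matrix_def H_sym using H_invol[OF assms] by simp

lemma orth_norm:
  fixes Q :: "real^3^3"
  assumes "orthogonal_matrix Q" shows "norm (Q *v x) = norm x"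
proof -
  have "orthogonal_transformation (\<lambda>x. Q *v x)"
    unfolding orthogonal_transformation_matrix using assms
    by (simp add: matrix_of_matrix_vector_mul del: transpose_matrix_vector)
  then show ?thesis unfolding orthogonal_transformation_def by (simp add: norm_eq)
qed

lemma gram3:
  fixes u v x :: "real^3"
  shows "(u\<bullet>u)*(v\<bullet>v)*(x\<bullet>x) + 2*(u\<bullet>v)*(v\<bullet>x)*(x\<bullet>u) - (u\<bullet>u)*(v\<bullet>x)^2 - (v\<bullet>v)*(u\<bullet>x)^2 - (x\<bullet>x)*(u\<bullet>v)^2
     = (u$1*(v$2*x$3 - v$3*x$2) - u$2*(v$1*x$3 - v$3*x$1) + u$3*(v$1*x$2 - v$2*x$1))^2"
  by (simp add: inner_vec_def sum_3 power2_eq_square algebra_simps)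

lemma gram_unit:
  fixes u v x :: "real^3"
  assumes "norm u = 1" "norm v = 1"
  shows "(u\<bullet>x)^2 + (v\<bullet>x)^2 - 2*(u\<bullet>v)*(u\<bullet>x)*(v\<bullet>x) \<le> (1 - (u\<bullet>v)^2) * (x\<bullet>x)"
proof -
  have uu: "u\<bullet>u = 1" and vv: "v\<bullet>v = 1" using assms by (simp_all add: dot_square_norm)
  have "0 \<le> (u\<bullet>u)*(v\<bullet>v)*(x\<bullet>x) + 2*(u\<bullet>v)*(v\<bullet>x)*(x\<bullet>u) - (u\<bullet>u)*(v\<bullet>x)^2 - (v\<bullet>v)*(u\<bullet>x)^2 - (x\<bullet>x)*(u\<bullet>v)^2"
    unfolding gram3 by simp
  then show ?thesis unfolding uu vv by (simp add: inner_commute algebra_simps)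
qed

lemma perp_exists:
  fixes u :: "real^3"
  obtains a where "a \<noteq> 0" "a \<bullet> u = 0"
proof (cases "u$1 = 0 \<and> u$2 = 0")
  case True
  show thesis
  proof (rule that[of "vector [1, 0, 0]"])
    show "(vector [1, 0, 0] :: real^3) \<noteq> 0" by (simp add: vec_eq_iff forall_3)
    show "(vector [1, 0, 0] :: real^3) \<bullet> u = 0" using True by (simp add: inner_vec_def sum_3)
  qed
next
  case False
  show thesis
  proof (rule that[of "vector [- u$2, u$1, 0]"])
    show "(vector [- u$2, u$1, 0] :: real^3) \<noteq> 0" using False by (auto simp: vec_eq_iff forall_3)
    show "(vector [- u$2, u$1, 0] :: real^3) \<bullet> u = 0" by (simp add: inner_vec_def sum_3)
  qed
qed

lemma rot_exists:
  fixes u v :: "real^3"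
  assumes u: "norm u = 1" and v: "norm v = 1"
  shows "\<exists>S. orthogonal_matrix S \<and> det S = 1 \<and> S *v v = u \<and>
           (\<forall>x. norm (x - S *v x) \<le> norm (u - v) * norm x)"
proof -
  have uu: "u \<bullet> u = 1" and vv: "v \<bullet> v = 1" using u v by (simp_all add: dot_square_norm)
  have u0: "u \<noteq> 0" using u by auto
  show ?thesis
  proof (cases "u + v = 0")
    case True
    then have vu: "v = - u" by (simp add: add_eq_0_iff)
    obtain a :: "real^3" where a0: "a \<noteq> 0" and au: "a \<bullet> u = 0" by (rule perp_exists)
    define S where "S = H u ** H a"
    have orth: "orthogonal_matrix S" unfolding S_def by (intro orthogonal_matrix_mul H_orth u0 a0)
    have det: "det S = 1" unfolding S_def by (simp add: det_mul det_H u0 a0)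
    have Hav: "H a *v v = v" using au by (simp add: H_apply vu)
    have Huv: "H u *v v = u"
    proof -
      have "H u *v v = - u + 2 *\<^sub>R u" by (simp add: H_apply vu uu)
      also have "\<dots> = u" by (simp add: scaleR_2)
      finally show ?thesis .
    qed
    have Sv: "S *v v = u"
      unfolding S_def by (simp add: matrix_vector_mul_assoc[symmetric] Hav Huv)
    have bnd: "norm (x - S *v x) \<le> norm (u - v) * norm x" for x
    proof -
      have "norm (x - S *v x) \<le> norm x + norm (S *v x)" by (rule norm_triangle_ineq4)
      also have "\<dots> = 2 * norm x" using orth_norm[OF orth] by simp
      finally have *: "norm (x - S *v x) \<le> 2 * norm x" .
      have "u - v = 2 *\<^sub>R u" by (simp add: vu scaleR_2)
      then have "norm (u - v) = 2" using u by simp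
      then show ?thesis using * by simp
    qed
    show ?thesis using orth det Sv bnd by blast
  next
    case False
    define s where "s = u + v"
    define k where "k = u \<bullet> v"
    have s0: "s \<noteq> 0" using False by (simp add: s_def)
    have ss: "s \<bullet> s = 2 + 2 * k" by (simp add: s_def k_def inner_add_left inner_add_right uu vv inner_commute)
    have su: "s \<bullet> u = 1 + k" by (simp add: s_def k_def inner_add_left uu inner_commute[of v u])
    have sv: "s \<bullet> v = 1 + k" by (simp add: s_def k_def inner_add_left vv)
    have kle: "\<bar>k\<bar> \<le> 1" using Cauchy_Schwarz_ineq2[of u v] u v by (simp add: k_def)
    have "s \<bullet> s \<noteq> 0" using s0 by simp
    then have k1: "1 + k > 0" using kle ss by auto
    define S where "S = H u ** H s"
    have orth: "orthogonal_matrix S" unfolding S_def by (intro orthogonal_matrix_mul H_orth u0 s0)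
    have det: "det S = 1" unfolding S_def by (simp add: det_mul det_H u0 s0)
    have Hsv: "H s *v v = - u"
    proof -
      have c: "2 * (s \<bullet> v) / (s \<bullet> s) = 1" using k1 by (simp add: sv ss)
      have "H s *v v = v - 1 *\<^sub>R s" unfolding H_apply c ..
      then show ?thesis by (simp add: s_def)
    qed
    have Hu: "H u *v (- u) = u"
    proof -
      have "H u *v (- u) = - u + 2 *\<^sub>R u" by (simp add: H_apply uu)
      also have "\<dots> = u" by (simp add: scaleR_2)
      finally show ?thesis .
    qed
    have Sv: "S *v v = u"
      unfolding S_def matrix_vector_mul_assoc[symmetric] Hsv Hu ..
    have bnd: "norm (x - S *v x) \<le> norm (u - v) * norm x" for x
    proof -
      define \<alpha> where "\<alpha> = u \<bullet> x"
      define \<beta> where "\<beta> = v \<bullet> x"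
      define X where "X = x \<bullet> x"
      define t where "t = 2 * (s \<bullet> x) / (s \<bullet> s)"
      have sx: "s \<bullet> x = \<alpha> + \<beta>" by (simp add: s_def \<alpha>_def \<beta>_def inner_add_left)
      have tk: "t * (1 + k) = \<alpha> + \<beta>" using k1 by (simp add: t_def ss sx field_simps)
      have ux: "u \<bullet> (x - t *\<^sub>R s) = - \<beta>"
        using tk by (simp add: inner_diff_right inner_commute[of u s] su \<alpha>_def[symmetric] algebra_simps)
      have Sx: "S *v x = (x - t *\<^sub>R s) + (2 * \<beta>) *\<^sub>R u"
        unfolding S_def by (simp add: matrix_vector_mul_assoc[symmetric] H_apply t_def[symmetric] ux uu)
      have d: "x - S *v x = t *\<^sub>R s - (2 * \<beta>) *\<^sub>R u" by (simp add: Sx)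
      have L: "(x - S *v x) \<bullet> (x - S *v x) = t^2 * (2 + 2*k) - 4 * t * \<beta> * (1 + k) + 4 * \<beta>^2"
        unfolding d by (simp add: inner_diff_left inner_diff_right ss su inner_commute[of u s] uu power2_eq_square algebra_simps)
      have e: "(t^2 * (2 + 2*k) - 4 * t * \<beta> * (1 + k) + 4 * \<beta>^2) * (1 + k)
           = 2 * (t * (1 + k))^2 - 4 * \<beta> * (t * (1 + k)) * (1 + k) + 4 * \<beta>^2 * (1 + k)"
        by (simp add: power2_eq_square algebra_simps)
      have g: "\<alpha>^2 + \<beta>^2 - 2 * k * \<alpha> * \<beta> \<le> (1 - k^2) * X"
        using gram_unit[OF u v, of x] by (simp add: \<alpha>_def \<beta>_def k_def X_def)
      have "(t^2 * (2 + 2*k) - 4 * t * \<beta> * (1 + k) + 4 * \<beta>^2) * (1 + k) = 2 * (\<alpha>^2 + \<beta>^2 - 2 * k * \<alpha> * \<beta>)"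
        unfolding e tk by (simp add: power2_eq_square algebra_simps)
      also have "\<dots> \<le> 2 * ((1 - k^2) * X)" using g by simp
      also have "\<dots> = ((2 - 2 * k) * X) * (1 + k)" by (simp add: power2_eq_square algebra_simps)
      finally have "t^2 * (2 + 2*k) - 4 * t * \<beta> * (1 + k) + 4 * \<beta>^2 \<le> (2 - 2 * k) * X"
        using k1 by (simp add: mult_le_cancel_right)
      moreover have "(norm (u - v) * norm x)^2 = (2 - 2 * k) * X"
        by (simp add: power_mult_distrib power2_norm_eq_inner inner_diff_left inner_diff_right uu vv k_def X_def inner_commute)
      ultimately show ?thesis
        unfolding norm_le_square using L by simp
    qed
    show ?thesis using orth det Sv bnd by blast
  qed
qed

lemma Pdist:
  fixes y z :: "real^3"
  shows "dist (vector [y$1, y$2] :: real^2) (vector [z$1, z$2]) \<le> norm (y - z)"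
  unfolding dist_norm norm_le by (simp add: inner_vec_def sum_2 sum_3)

lemma angle_facts:
  fixes u v :: "real^3"
  assumes u: "norm u = 1" and v: "norm v = 1"
  shows "norm (u - v) = 2 * sin (vec_angle u v / 2)" "0 \<le> 2 * sin (vec_angle u v / 2)"
    "2 * sin (vec_angle u v / 2) \<le> vec_angle u v"
proof -
  define k where "k = u \<bullet> v"
  define \<theta> where "\<theta> = vec_angle u v"
  have th: "\<theta> = arccos k" by (simp add: \<theta>_def vec_angle_def k_def u v)
  have kle: "\<bar>k\<bar> \<le> 1" using Cauchy_Schwarz_ineq2[of u v] u v by (simp add: k_def)
  then have k1: "-1 \<le> k" "k \<le> 1" by auto
  have t0: "0 \<le> \<theta>" and tpi: "\<theta> \<le> pi" using arccos_lbound[OF k1] arccos_ubound[OF k1] th by auto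
  have s0: "0 \<le> sin (\<theta> / 2)" using t0 tpi by (intro sin_ge_zero) auto
  show "0 \<le> 2 * sin (vec_angle u v / 2)" using s0 by (simp add: \<theta>_def)
  have "2 * sin (\<theta> / 2) \<le> 2 * (\<theta> / 2)" using sin_x_le_x[of "\<theta>/2"] t0 by simp
  then show "2 * sin (vec_angle u v / 2) \<le> vec_angle u v" by (simp add: \<theta>_def)
  have ck: "cos \<theta> = k" using th k1 by simp
  have "cos \<theta> = 1 - 2 * sin (\<theta>/2) ^ 2" using cos_double_sin[of "\<theta>/2"] by simp
  then have sq: "(2 * sin (\<theta>/2))^2 = 2 - 2 * k" using ck by (simp add: power_mult_distrib)
  have uu: "u \<bullet> u = 1" and vv: "v \<bullet> v = 1" using u v by (simp_all add: dot_square_norm)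
  have "(norm (u - v))^2 = 2 - 2 * k"
    by (simp add: power2_norm_eq_inner inner_diff_left inner_diff_right uu vv k_def inner_commute)
  then have "(norm (u - v))^2 = (2 * sin (\<theta>/2))^2" using sq by simp
  then show "norm (u - v) = 2 * sin (vec_angle u v / 2)"
    using s0 by (subst (asm) power2_eq_iff_nonneg) (simp_all add: \<theta>_def)
qed

theorem proposition1:
  fixes p :: real and \<rho> :: "real^3 \<Rightarrow> real" and u v :: "real^3"
    and R1 R2 :: "real^3^3"
  assumes "p \<ge> 1"
    and "\<rho> \<in> borel_measurable lborel"
    and "\<forall>x. \<rho> x \<ge> 0"
    and "(\<integral>\<^sup>+ x. ennreal (\<rho> x) \<partial>lborel) = 1"
    and "\<forall>x. x \<notin> cball 0 1 \<longrightarrow> \<rho> x = 0"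
    and "norm u = 1" and "norm v = 1"
    and "R1 \<in> SO" and "R1 *v u = vector [0, 0, -1]"
    and "R2 \<in> SO" and "R2 *v v = vector [0, 0, -1]"
  shows "wasserstein_rot p (tomo_proj R1 \<rho>) (tomo_proj R2 \<rho>) powr p
           \<le> (2 * sin (vec_angle u v / 2)) powr p
         \<and> (2 * sin (vec_angle u v / 2)) powr p \<le> vec_angle u v powr p"
proof -
  note p = assms(1) and \<rho>m = assms(2) and nn = assms(3) and one = assms(4) and supp = assms(5)
  note u = assms(6) and v = assms(7)
  have R1o: "orthogonal_matrix R1" and R1d: "det R1 = 1" using assms(8) by (auto simp: SO_def)
  have R2o: "orthogonal_matrix R2" and R2d: "det R2 = 1" using assms(10) by (auto simp: SO_def)
  define e where "e = (vector [0, 0, -1] :: real^3)"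
  have R1u: "R1 *v u = e" and R2v: "R2 *v v = e" using assms(9,11) by (simp_all add: e_def)
  obtain S where So: "orthogonal_matrix S" and Sd: "det S = 1" and Sv: "S *v v = u"
    and Sb: "\<And>x. norm (x - S *v x) \<le> norm (u - v) * norm x"
    using rot_exists[OF u v] by blast
  have inv: "transpose Q *v (Q *v x) = x" if "orthogonal_matrix Q" for Q :: "real^3^3" and x
    using that by (simp add: orthogonal_matrix_def matrix_vector_mul_assoc del: transpose_matrix_vector)
  define G where "G = R1 ** S ** transpose R2"
  have Go: "orthogonal_matrix G" unfolding G_def
    by (intro orthogonal_matrix_mul R1o So) (simp add: R2o)
  have Gd: "det G = 1" unfolding G_def by (simp add: det_mul R1d Sd R2d)
  have Ge: "G *v e = e"
  proof -
    have "transpose R2 *v e = v" using inv[OF R2o, of v] R2v by simp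
    then show ?thesis unfolding G_def
      by (simp add: matrix_vector_mul_assoc[symmetric] Sv R1u del: transpose_matrix_vector)
  qed
  have GTe: "transpose G *v e = e"
  proof -
    have tG: "transpose G = R2 ** transpose S ** transpose R1"
      unfolding G_def by (simp add: matrix_transpose_mul matrix_mul_assoc)
    have "transpose R1 *v e = u" using inv[OF R1o, of u] R1u by simp
    moreover have "transpose S *v u = v" using inv[OF So, of v] Sv by simp
    ultimately show ?thesis unfolding tG
      by (simp add: matrix_vector_mul_assoc[symmetric] R2v del: transpose_matrix_vector)
  qed
  have G13: "G$1$3 = 0" and G23: "G$2$3 = 0" and G33: "G$3$3 = 1"
    using Ge by (simp_all add: e_def vec_eq_iff forall_3 matrix_vector_mult_def sum_3)
  have G31: "G$3$1 = 0" and G32: "G$3$2 = 0"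
    using GTe by (simp_all add: e_def vec_eq_iff forall_3 vector_matrix_mult_def sum_3)
  define g :: "real^2^2" where "g = (\<chi> i j. G $ (if i = 1 then 1 else 2) $ (if j = 1 then 1 else 2))"
  have g11: "g$1$1 = G$1$1" and g12: "g$1$2 = G$1$2" and g21: "g$2$1 = G$2$1" and g22: "g$2$2 = G$2$2"
    by (simp_all add: g_def)
  have GTG: "transpose G ** G = mat 1" using Go by (simp add: orthogonal_matrix)
  have gT: "transpose g ** g = mat 1"
  proof -
    have E: "\<And>i j. (transpose G ** G)$i$j = (mat 1 :: real^3^3)$i$j" using GTG by simp
    have e11: "G$1$1 * G$1$1 + G$2$1 * G$2$1 = 1" using E[of 1 1] G31
      by (simp add: matrix_matrix_mult_def transpose_def sum_3 mat_def)
    have e12: "G$1$1 * G$1$2 + G$2$1 * G$2$2 = 0" using E[of 1 2] G31 G32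
      by (simp add: matrix_matrix_mult_def transpose_def sum_3 mat_def)
    have e21: "G$1$2 * G$1$1 + G$2$2 * G$2$1 = 0" using E[of 2 1] G31 G32
      by (simp add: matrix_matrix_mult_def transpose_def sum_3 mat_def)
    have e22: "G$1$2 * G$1$2 + G$2$2 * G$2$2 = 1" using E[of 2 2] G32
      by (simp add: matrix_matrix_mult_def transpose_def sum_3 mat_def)
    show ?thesis
      by (simp add: vec_eq_iff forall_2 matrix_matrix_mult_def transpose_def sum_2 mat_def
          g11 g12 g21 g22 e11 e12 e21 e22)
  qed
  have gd: "det g = 1"
  proof -
    have "det G = G$1$1 * G$2$2 - G$1$2 * G$2$1"
      by (simp add: det_3 G13 G23 G33 G31 G32)
    then show ?thesis using Gd by (simp add: det_2 g11 g12 g21 g22)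
  qed
  have gSO: "g \<in> SO" unfolding SO_def using gT gd by (simp add: orthogonal_matrix)
  have GR2: "G ** R2 = R1 ** S"
  proof -
    have "transpose R2 ** R2 = mat 1" using R2o by (simp add: orthogonal_matrix)
    then show ?thesis unfolding G_def by (simp add: matrix_mul_assoc[symmetric])
  qed
  have key: "transpose G *v vector [w$1, w$2, z] = vector [(transpose g *v w)$1, (transpose g *v w)$2, z]"
    for w :: "real^2" and z :: real
    by (simp add: vec_eq_iff forall_3 vector_matrix_mult_def sum_2 sum_3 g11 g12 g21 g22 G13 G23 G33 G31 G32)
  have rot: "rot_density g (tomo_proj R2 \<rho>) = tomo_proj (R1 ** S) \<rho>"
  proof
    fix w :: "real^2"
    have "tomo_proj (R1 ** S) \<rho> w = (LINT z|lborel. \<rho> (transpose (G ** R2) *v vector [w$1, w$2, z]))"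
      unfolding tomo_proj_def rot_density_def GR2 ..
    also have "\<dots> = (LINT z|lborel. \<rho> (transpose R2 *v (transpose G *v vector [w$1, w$2, z])))"
      by (simp only: matrix_transpose_mul matrix_vector_mul_assoc)
    also have "\<dots> = (LINT z|lborel. \<rho> (transpose R2 *v vector [(transpose g *v w)$1, (transpose g *v w)$2, z]))"
      by (simp only: key)
    also have "\<dots> = rot_density g (tomo_proj R2 \<rho>) w"
      unfolding tomo_proj_def rot_density_def ..
    finally show "rot_density g (tomo_proj R2 \<rho>) w = tomo_proj (R1 ** S) \<rho> w" ..
  qed
  have R1So: "orthogonal_matrix (R1 ** S)" by (intro orthogonal_matrix_mul R1o So)
  have Wg: "wasserstein p (dens_measure (tomo_proj R1 \<rho>)) (dens_measure (rot_density g (tomo_proj R2 \<rho>))) \<le> norm (u - v)"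
    unfolding rot
  proof (rule wass_bound[OF R1o R1So \<rho>m nn one supp p])
    show "0 \<le> norm (u - v)" by simp
    fix x :: "real^3" assume x: "x \<in> cball 0 1"
    have "dist (vector [(R1 *v x)$1, (R1 *v x)$2] :: real^2) (vector [((R1 ** S) *v x)$1, ((R1 ** S) *v x)$2])
        \<le> norm (R1 *v x - (R1 ** S) *v x)" by (rule Pdist)
    also have "R1 *v x - (R1 ** S) *v x = R1 *v (x - S *v x)"
      by (simp add: matrix_vector_mul_assoc[symmetric] matrix_vector_mult_diff_distrib)
    also have "norm (R1 *v (x - S *v x)) = norm (x - S *v x)" by (rule orth_norm[OF R1o])
    also have "\<dots> \<le> norm (u - v) * norm x" by (rule Sb)
    also have "\<dots> \<le> norm (u - v) * 1" using x by (intro mult_left_mono) auto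
    finally show "dist (vector [(R1 *v x)$1, (R1 *v x)$2] :: real^2) (vector [((R1 ** S) *v x)$1, ((R1 ** S) *v x)$2]) \<le> norm (u - v)"
      by simp
  qed
  let ?W = "\<lambda>g. wasserstein p (dens_measure (tomo_proj R1 \<rho>)) (dens_measure (rot_density g (tomo_proj R2 \<rho>)))"
  have Wnn: "0 \<le> ?W h" for h by (simp add: wasserstein_def)
  have bdd: "bdd_below (?W ` SO)" by (rule bdd_belowI[of _ 0]) (use Wnn in auto)
  have Wrot: "wasserstein_rot p (tomo_proj R1 \<rho>) (tomo_proj R2 \<rho>) \<le> norm (u - v)"
    unfolding wasserstein_rot_def using cINF_lower[OF bdd gSO] Wg by linarith
  have Wrot0: "0 \<le> wasserstein_rot p (tomo_proj R1 \<rho>) (tomo_proj R2 \<rho>)"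
    unfolding wasserstein_rot_def using gSO by (intro cINF_greatest Wnn) auto
  have a1: "norm (u - v) = 2 * sin (vec_angle u v / 2)" and a2: "0 \<le> 2 * sin (vec_angle u v / 2)"
    and a3: "2 * sin (vec_angle u v / 2) \<le> vec_angle u v" using angle_facts[OF u v] by auto
  show ?thesis
  proof
    show "wasserstein_rot p (tomo_proj R1 \<rho>) (tomo_proj R2 \<rho>) powr p \<le> (2 * sin (vec_angle u v / 2)) powr p"
      using Wrot Wrot0 p a1 by (intro powr_mono2) auto
    show "(2 * sin (vec_angle u v / 2)) powr p \<le> vec_angle u v powr p"
      using a2 a3 p by (intro powr_mono2) auto
  qed
qed

end
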